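(* Let $\Omega=(a,b)$ be a bounded interval, $\lambda\ge0$, $\mu\in(0,1]$ with $\mu\ne\frac12$, and $u\in H_0^\mu(\Omega)$. Then $$\|u\|_{L^2(\Omega)}\lesssim\left\|{}_a\mathbb{D}_x^{\mu,\lambda}u\right\|_{L^2(\Omega)}\quad\text{and}\quad\|u\|_{L^2(\Omega)}\lesssim\left\|{}_x\mathbb{D}_b^{\mu,\lambda}u\right\|_{L^2(\Omega)}.$$
   Context: For $n-1\le\mu<n$ ($n$ a positive integer) and $\lambda\ge0$, ${}_a\mathbb{D}_x^{\mu,\lambda}u(x)=\frac{e^{-\lambda x}}{\Gamma(n-\mu)}\frac{d^n}{dx^n}\int_a^x\frac{e^{\lambda\xi}u(\xi)}{(x-\xi)^{\mu-n+1}}d\xi$ and ${}_x\mathbb{D}_b^{\mu,\lambda}u(x)=\frac{(-1)^ne^{\lambda x}}{\Gamma(n-\mu)}\frac{d^n}{dx^n}\int_x^b\frac{e^{-\lambda\xi}u(\xi)}{(\xi-x)^{\mu-n+1}}d\xi$, defined on $C_0^\infty(\Omega)$ and extended by continuity to bounded operators $H_0^\mu(\Omega)\to L^2(\Omega)$ for $0<\mu\le1$. $H_0^\mu(\Omega)$ is the closure of $C_0^\infty(\Omega)$ in the fractional Sobolev norm $\|u\|^2_{H^\mu(\Omega)}=\|u\|^2_{L^2(\Omega)}+\inf_{\tilde u|_\Omega=u}\int_{\mathbb R}|\omega|^{2\mu}|\mathscr F[\tilde u](\omega)|^2d\omega$, $\mathscr{F}[u](\omega)=\int_{\mathbb R}e^{-i\omega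 x}u(x)dx$. Notation: $A\lesssim B$ means $A\le CB$ with $C$ independent of $u$. *)

theory Defs
  imports "HOL-Analysis.Analysis"
begin

definition test_fun :: "real \<Rightarrow> real \<Rightarrow> (real \<Rightarrow> real) set" where
  "test_fun a b = {f. (\<forall>k x. ((deriv ^^ k) f) differentiable (at x)) \<and>
                      (\<exists>c d. a < c \<and> d < b \<and> (\<forall>x. x \<notin> {c..d} \<longrightarrow> f x = 0))}"

definition L2sq :: "real \<Rightarrow> real \<Rightarrow> (real \<Rightarrow> real) \<Rightarrow> ennreal" where
  "L2sq a b f = (\<integral>\<^sup>+ x. indicator {a<..<b} x * ennreal ((f x)\<^sup>2) \<partial>lborel)"

definition fourier :: "(real \<Rightarrow> real) \<Rightarrow> real \<Rightarrow> complex" where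
  "fourier u w = (LINT x|lborel. cis (- w * x) * complex_of_real (u x))"

definition extensions :: "real \<Rightarrow> real \<Rightarrow> (real \<Rightarrow> real) \<Rightarrow> (real \<Rightarrow> real) set" where
  "extensions a b w = {v. v \<in> borel_measurable lborel \<and> integrable lborel v \<and>
       (\<integral>\<^sup>+ x. ennreal ((v x)\<^sup>2) \<partial>lborel) < \<infinity> \<and>
       (AE x in lborel. x \<in> {a<..<b} \<longrightarrow> v x = w x)}"

definition Hsq :: "real \<Rightarrow> real \<Rightarrow> real \<Rightarrow> (real \<Rightarrow> real) \<Rightarrow> ennreal" where
  "Hsq a b \<mu> w = L2sq a b w +
     (INF v \<in> extensions a b w.
        \<integral>\<^sup>+ \<omega>. ennreal (\<bar>\<omega>\<bar> powr (2 * \<mu>) * (cmod (fourier v \<omega>))\<^sup>2) \<partial>lborel)"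

definition ord_n :: "real \<Rightarrow> nat" where
  "ord_n \<mu> = nat \<lfloor>\<mu>\<rfloor> + 1"

definition DL :: "real \<Rightarrow> real \<Rightarrow> real \<Rightarrow> (real \<Rightarrow> real) \<Rightarrow> real \<Rightarrow> real" where
  "DL a \<mu> lam u x = exp (- lam * x) / Gamma (real (ord_n \<mu>) - \<mu>) *
     (deriv ^^ ord_n \<mu>) (\<lambda>y. LBINT \<xi>=a..y. exp (lam * \<xi>) * u \<xi> / (y - \<xi>) powr (\<mu> - real (ord_n \<mu>) + 1)) x"

definition DR :: "real \<Rightarrow> real \<Rightarrow> real \<Rightarrow> (real \<Rightarrow> real) \<Rightarrow> real \<Rightarrow> real" where
  "DR b \<mu> lam u x = (-1) ^ ord_n \<mu> * exp (lam * x) / Gamma (real (ord_n \<mu>) - \<mu>) *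
     (deriv ^^ ord_n \<mu>) (\<lambda>y. LBINT \<xi>=y..b. exp (- lam * \<xi>) * u \<xi> / (\<xi> - y) powr (\<mu> - real (ord_n \<mu>) + 1)) x"

definition L2 :: "real \<Rightarrow> real \<Rightarrow> (real \<Rightarrow> real) set" where
  "L2 a b = {f. (\<lambda>x. indicator {a<..<b} x * f x) \<in> borel_measurable lborel \<and> L2sq a b f < \<infinity>}"

definition H0 :: "real \<Rightarrow> real \<Rightarrow> real \<Rightarrow> (real \<Rightarrow> real) set" where
  "H0 a b \<mu> = {u. u \<in> L2 a b \<and> (\<exists>\<phi>. (\<forall>k. \<phi> k \<in> test_fun a b) \<and>
                   (\<lambda>k. Hsq a b \<mu> (\<lambda>x. \<phi> k x - u x)) \<longlonglongrightarrow> 0)}"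

text \<open>v is the value at u of the continuous extension of the operator D (given on test
  functions) from H_0^mu to L2: the L2-limit of D(phi_k) for any test sequence phi_k -> u in H^mu.\<close>
definition ext_value :: "real \<Rightarrow> real \<Rightarrow> real \<Rightarrow> ((real \<Rightarrow> real) \<Rightarrow> real \<Rightarrow> real)
     \<Rightarrow> (real \<Rightarrow> real) \<Rightarrow> (real \<Rightarrow> real) \<Rightarrow> bool" where
  "ext_value a b \<mu> D u v \<longleftrightarrow> v \<in> L2 a b \<and>
     (\<forall>\<phi>. (\<forall>k. \<phi> k \<in> test_fun a b) \<and> (\<lambda>k. Hsq a b \<mu> (\<lambda>x. \<phi> k x - u x)) \<longlonglongrightarrow> 0
        \<longrightarrow> (\<lambda>k. L2sq a b (\<lambda>x. D (\<phi> k) x - v x)) \<longlonglongrightarrow> 0)"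

end

theory Submission
  imports Defs
begin


definition KK :: "real \<Rightarrow> real \<Rightarrow> real" where
  "KK e t = (if 0 < t then t powr (- e) else 0)"

lemma KK_meas[measurable]: "KK e \<in> borel_measurable borel"
  unfolding KK_def by measurable

lemma KK_nonneg: "0 \<le> KK e t"
  by (simp add: KK_def)

lemma KK_nn_int:
  assumes "0 \<le> e" "e < 1" "0 \<le> R"
  shows "(\<integral>\<^sup>+t. ennreal (indicator {0<..R} t * KK e t) \<partial>lborel) = ennreal (R powr (1-e)/(1-e))"
proof -
  have "(\<integral>\<^sup>+t. ennreal (indicator {0..R} t * t powr (-e)) \<partial>lborel) = ennreal (R powr (-e+1)/(-e+1))"
    by (rule nn_integral_has_integral_lebesgue[OF _ has_integral_powr_from_0]) (use assms in auto)
  moreover have "(\<integral>\<^sup>+t. ennreal (indicator {0<..R} t * KK e t) \<partial>lborel) = (\<integral>\<^sup>+t. ennreal (indicator {0..R} t * t powr (-e)) \<partial>lborel)"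
    by (intro nn_integral_cong) (auto simp: KK_def indicator_def)
  ultimately show ?thesis by (simp add: add.commute)
qed

lemma KK_integrable:
  assumes "0 \<le> e" "e < 1" "0 \<le> R"
  shows "integrable lborel (\<lambda>t. indicator {0<..R} t * KK e t)"
proof (rule integrableI_bounded)
  show "(\<lambda>t. indicator {0<..R} t * KK e t) \<in> borel_measurable lborel" by measurable
  have "(\<integral>\<^sup>+t. ennreal (norm (indicator {0<..R} t * KK e t)) \<partial>lborel) = (\<integral>\<^sup>+t. ennreal (indicator {0<..R} t * KK e t) \<partial>lborel)"
    by (intro nn_integral_cong) (auto simp: KK_nonneg)
  also have "\<dots> < \<infinity>" using KK_nn_int[OF assms] by simp
  finally show "(\<integral>\<^sup>+t. ennreal (norm (indicator {0<..R} t * KK e t)) \<partial>lborel) < \<infinity>" .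
qed

lemma KK_integral:
  assumes "0 \<le> e" "e < 1" "0 \<le> R"
  shows "(\<integral>t. indicator {0<..R} t * KK e t \<partial>lborel) = R powr (1-e)/(1-e)"
proof -
  have "ennreal (\<integral>t. indicator {0<..R} t * KK e t \<partial>lborel) = (\<integral>\<^sup>+t. ennreal (indicator {0<..R} t * KK e t) \<partial>lborel)"
    by (rule nn_integral_eq_integral[symmetric]) (use KK_integrable[OF assms] in \<open>auto simp: KK_nonneg\<close>)
  also have "\<dots> = ennreal (R powr (1-e)/(1-e))" by (rule KK_nn_int[OF assms])
  finally show ?thesis
    by (subst (asm) ennreal_inj) (use assms in \<open>auto intro!: integral_nonneg_AE simp: KK_nonneg\<close>)
qed

lemma dom_bound:
  assumes [measurable]: "h \<in> borel_measurable lborel" and "0 \<le> e" "e < 1" "0 \<le> R" "0 \<le> C"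
    and b: "\<And>t. \<bar>h t\<bar> \<le> C * (indicator {0<..R} t * KK e t)"
  shows "integrable lborel h" "\<bar>\<integral>t. h t \<partial>lborel\<bar> \<le> C * (R powr (1-e)/(1-e))"
proof -
  have I: "integrable lborel (\<lambda>t. C * (indicator {0<..R} t * KK e t))"
    using KK_integrable[OF assms(2-4)] by simp
  show hi: "integrable lborel h"
  proof (rule Bochner_Integration.integrable_bound[OF I])
    have nn: "0 \<le> C * (indicator {0<..R} t * KK e t)" for t by (simp add: KK_nonneg assms)
    show "AE x in lborel. norm (h x) \<le> norm (C * (indicator {0<..R} x * KK e x))"
      using b nn by (intro AE_I2) (simp add: abs_of_nonneg)
  qed simp
  have "\<bar>\<integral>t. h t \<partial>lborel\<bar> \<le> (\<integral>t. \<bar>h t\<bar> \<partial>lborel)"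
    using integral_norm_bound[of lborel h] by simp
  also have "\<dots> \<le> (\<integral>t. C * (indicator {0<..R} t * KK e t) \<partial>lborel)"
    by (intro integral_mono hi I integrable_abs b)
  also have "\<dots> = C * (R powr (1-e)/(1-e))"
    using KK_integral[OF assms(2-4)] by simp
  finally show "\<bar>\<integral>t. h t \<partial>lborel\<bar> \<le> C * (R powr (1-e)/(1-e))" .
qed



definition FK :: "real \<Rightarrow> (real \<Rightarrow> real) \<Rightarrow> real \<Rightarrow> real" where
  "FK e f y = (\<integral>t. f (y - t) * KK e t \<partial>lborel)"

lemma FK_bound:
  assumes [measurable]: "f \<in> borel_measurable borel" and "0 \<le> e" "e < 1"
    and M: "\<And>x. \<bar>f x\<bar> \<le> M" and z: "\<And>x. x < c \<Longrightarrow> f x = 0"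
  shows "integrable lborel (\<lambda>t. f (y - t) * KK e t)"
        "\<bar>FK e f y\<bar> \<le> M * ((max 0 (y - c)) powr (1-e)/(1-e))"
proof -
  have M0: "0 \<le> M" using M[of 0] by simp
  have b: "\<bar>f (y - t) * KK e t\<bar> \<le> M * (indicator {0<..max 0 (y - c)} t * KK e t)" for t
  proof (cases "0 < t \<and> t \<le> max 0 (y - c)")
    case True
    then show ?thesis using M[of "y - t"] by (simp add: abs_mult KK_nonneg mult_right_mono)
  next
    case False
    then have "t \<le> 0 \<or> y - t < c" by auto
    then show ?thesis using False z[of "y - t"] M0 by (auto simp: KK_def indicator_def)
  qed
  have m: "(\<lambda>t. f (y - t) * KK e t) \<in> borel_measurable lborel" by measurable
  show "integrable lborel (\<lambda>t. f (y - t) * KK e t)"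
    by (rule dom_bound(1)[OF m assms(2,3) _ M0 b]) simp
  show "\<bar>FK e f y\<bar> \<le> M * ((max 0 (y - c)) powr (1-e)/(1-e))"
    unfolding FK_def by (rule dom_bound(2)[OF m assms(2,3) _ M0 b]) simp
qed

lemma lipschitz_from_deriv:
  assumes d: "\<And>x. (g has_real_derivative g' x) (at x)" and b: "\<And>x. \<bar>g' x\<bar> \<le> M"
  shows "\<bar>g u - g v\<bar> \<le> M * \<bar>u - v\<bar>"
proof -
  have *: "\<bar>g q - g p\<bar> \<le> M * (q - p)" if pq: "p < q" for p q
  proof -
    obtain z where "g q - g p = (q - p) * g' z" using MVT2[OF pq, of g g'] d by blast
    then show ?thesis using b[of z] pq by (simp add: abs_mult mult.commute mult_right_mono)
  qed
  show ?thesis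
  proof (cases u v rule: linorder_cases)
    case less then show ?thesis using *[OF less] by (simp add: abs_minus_commute)
  next
    case greater then show ?thesis using *[OF greater] by simp
  qed simp
qed

lemma taylor2_bound:
  assumes d1: "\<And>x. (f has_real_derivative f1 x) (at x)"
    and d2: "\<And>x. (f1 has_real_derivative f2 x) (at x)" and b: "\<And>x. \<bar>f2 x\<bar> \<le> M"
  shows "\<bar>f (x + h) - f x - h * f1 x\<bar> \<le> M * h\<^sup>2"
proof -
  have L: "\<bar>f1 u - f1 v\<bar> \<le> M * \<bar>u - v\<bar>" for u v by (rule lipschitz_from_deriv[OF d2 b])
  show ?thesis
  proof (cases h "0::real" rule: linorder_cases)
    case greater
    obtain z where z: "x < z" "z < x + h" "f (x + h) - f x = (x + h - x) * f1 z"
      using MVT2[of x "x+h" f f1] d1 greater by auto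
    have "f (x + h) - f x - h * f1 x = h * (f1 z - f1 x)" using z by (simp add: algebra_simps)
    then have "\<bar>f (x + h) - f x - h * f1 x\<bar> = h * \<bar>f1 z - f1 x\<bar>"
      using greater by (simp add: abs_mult)
    also have "\<dots> \<le> h * (M * \<bar>z - x\<bar>)" using L greater by (simp add: mult_left_mono)
    also have "\<dots> \<le> h * (M * h)"
      using z greater b[of 0] by (intro mult_left_mono) (auto intro!: mult_left_mono)
    finally show ?thesis by (simp add: power2_eq_square mult_ac)
  next
    case less
    obtain z where z: "x + h < z" "z < x" "f x - f (x + h) = (x - (x + h)) * f1 z"
      using MVT2[of "x+h" x f f1] d1 less by auto
    have "f (x + h) - f x - h * f1 x = (- h) * (f1 x - f1 z)" using z by (simp add: algebra_simps)
    then have "\<bar>f (x + h) - f x - h * f1 x\<bar> = (- h) * \<bar>f1 x - f1 z\<bar>"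
      using less by (simp add: abs_mult)
    also have "\<dots> \<le> (- h) * (M * \<bar>x - z\<bar>)" using L less by (simp add: mult_left_mono)
    also have "\<dots> \<le> (- h) * (M * (- h))"
      using z less b[of 0] by (intro mult_left_mono) (auto intro!: mult_left_mono)
    finally show ?thesis by (simp add: power2_eq_square mult_ac)
  qed simp
qed

lemma deriv_cont: "(\<And>x. (f has_real_derivative f1 x) (at x)) \<Longrightarrow> continuous_on UNIV f"
  by (meson DERIV_isCont continuous_at_imp_continuous_on)

lemma FK_deriv:
  assumes d1: "\<And>x. (f has_real_derivative f1 x) (at x)"
    and d2: "\<And>x. (f1 has_real_derivative f2 x) (at x)"
    and b0: "\<And>x. \<bar>f x\<bar> \<le> M0" and b1: "\<And>x. \<bar>f1 x\<bar> \<le> M1" and b2: "\<And>x. \<bar>f2 x\<bar> \<le> M2"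
    and z0: "\<And>x. x < c \<Longrightarrow> f x = 0" and z1: "\<And>x. x < c \<Longrightarrow> f1 x = 0"
    and e: "0 \<le> e" "e < 1"
  shows "(FK e f has_real_derivative FK e f1 y) (at y)"
proof -
  have [measurable]: "f \<in> borel_measurable borel" "f1 \<in> borel_measurable borel"
    using deriv_cont[OF d1] deriv_cont[OF d2] by (auto intro: borel_measurable_continuous_onI)
  have M2: "0 \<le> M2" using b2[of 0] by simp
  define R where "R = max 0 (y + 1 - c)"
  define Kb where "Kb = R powr (1-e)/(1-e)"
  have R0: "0 \<le> R" by (simp add: R_def)
  have Kb0: "0 \<le> Kb" using e by (simp add: Kb_def)
  have I: "integrable lborel (\<lambda>t. f (z - t) * KK e t)" for z by (rule FK_bound(1)[OF _ e b0 z0]) simp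
  have I1: "integrable lborel (\<lambda>t. f1 (z - t) * KK e t)" for z by (rule FK_bound(1)[OF _ e b1 z1]) simp
  have Qb: "\<bar>(FK e f (y + h) - FK e f y) / h - FK e f1 y\<bar> \<le> M2 * \<bar>h\<bar> * Kb"
    if h: "h \<noteq> 0" "\<bar>h\<bar> < 1" for h
  proof -
    define D where "D t = (f (y + h - t) - f (y - t) - h * f1 (y - t)) * KK e t" for t
    have "(\<integral>t. D t \<partial>lborel) = (\<integral>t. f (y + h - t) * KK e t - f (y - t) * KK e t - h * (f1 (y - t) * KK e t) \<partial>lborel)"
      by (intro Bochner_Integration.integral_cong) (auto simp: D_def algebra_simps)
    also have "\<dots> = FK e f (y + h) - FK e f y - h * FK e f1 y"
      unfolding FK_def using I I1
      by (subst Bochner_Integration.integral_diff; (intro Bochner_Integration.integrable_diff integrable_mult_right)?; simp?)+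
    finally have Deq: "(\<integral>t. D t \<partial>lborel) = FK e f (y + h) - FK e f y - h * FK e f1 y" .
    have Db: "\<bar>D t\<bar> \<le> M2 * h\<^sup>2 * (indicator {0<..R} t * KK e t)" for t
    proof (cases "0 < t \<and> t \<le> R")
      case True
      have "\<bar>f (y - t + h) - f (y - t) - h * f1 (y - t)\<bar> \<le> M2 * h\<^sup>2"
        by (rule taylor2_bound[OF d1 d2 b2])
      moreover have "y - t + h = y + h - t" by simp
      ultimately have "\<bar>f (y + h - t) - f (y - t) - h * f1 (y - t)\<bar> \<le> M2 * h\<^sup>2" by metis
      then show ?thesis using True by (simp add: D_def abs_mult KK_nonneg mult_right_mono)
    next
      case False
      then have "t \<le> 0 \<or> (y + h - t < c \<and> y - t < c)" using h by (auto simp: R_def)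
      then show ?thesis using False z0 z1 by (auto simp: D_def KK_def indicator_def)
    qed
    have "\<bar>\<integral>t. D t \<partial>lborel\<bar> \<le> M2 * h\<^sup>2 * Kb"
      unfolding Kb_def by (rule dom_bound(2)[OF _ e R0 _ Db]) (auto simp: D_def M2)
    then have "\<bar>FK e f (y + h) - FK e f y - h * FK e f1 y\<bar> \<le> M2 * h\<^sup>2 * Kb" using Deq by simp
    moreover have "(FK e f (y + h) - FK e f y) / h - FK e f1 y = (FK e f (y + h) - FK e f y - h * FK e f1 y) / h"
      using h by (simp add: field_simps)
    ultimately show ?thesis using h
      by (simp add: abs_divide divide_le_eq power2_eq_square mult_ac)
  qed
  have "((\<lambda>h. (FK e f (y + h) - FK e f y) / h - FK e f1 y) \<longlongrightarrow> 0) (at 0)"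
  proof (rule Lim_null_comparison)
    show "\<forall>\<^sub>F h in at 0. norm ((FK e f (y + h) - FK e f y) / h - FK e f1 y) \<le> M2 * \<bar>h\<bar> * Kb"
      unfolding eventually_at by (rule exI[of _ 1]) (auto intro!: Qb simp: dist_real_def)
    show "((\<lambda>h. M2 * \<bar>h\<bar> * Kb) \<longlongrightarrow> 0) (at (0::real))"
      by (intro tendsto_eq_intros) auto
  qed
  then show ?thesis unfolding DERIV_def by (rule LIM_zero_cancel)
qed



lemma FK0_inv:
  assumes d1: "\<And>x. (f has_real_derivative f1 x) (at x)"
    and z0: "\<And>x. x < c \<Longrightarrow> f x = 0" and z1: "\<And>x. x < c \<Longrightarrow> f1 x = 0"
    and c1: "continuous_on UNIV f1"
  shows "FK 0 f1 y = f y"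
proof -
  define R where "R = max 1 (y - c + 1)"
  have R: "0 < R" by (simp add: R_def)
  have "FK 0 f1 y = (\<integral>t. indicator {0<..<R} t * f1 (y - t) \<partial>lborel)"
    unfolding FK_def
  proof (intro Bochner_Integration.integral_cong refl)
    fix t show "f1 (y - t) * KK 0 t = indicator {0<..<R} t * f1 (y - t)"
      using z1[of "y - t"] by (auto simp: KK_def indicator_def R_def)
  qed
  also have "\<dots> = \<bar>-1\<bar> *\<^sub>R (\<integral>x. indicator {0<..<R} (y + (-1) * x) * f1 (y - (y + (-1) * x)) \<partial>lborel)"
    by (rule lborel_integral_real_affine) simp
  also have "\<dots> = (\<integral>x. indicator {0<..<R} (y + (-1) * x) * f1 (y - (y + (-1) * x)) \<partial>lborel)"
    by simp
  also have "\<dots> = (\<integral>x. indicator {y - R<..<y} x *\<^sub>R f1 x \<partial>lborel)"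
    by (intro Bochner_Integration.integral_cong refl) (auto simp: indicator_def)
  also have "\<dots> = (LBINT x=y-R..y. f1 x)"
    using R by (simp add: interval_lebesgue_integral_le_eq set_lebesgue_integral_def)
  also have "\<dots> = f y - f (y - R)"
  proof (rule interval_integral_FTC_finite)
    show "continuous_on {min (y - R) y..max (y - R) y} f1"
      using c1 by (rule continuous_on_subset) simp
    fix x show "(f has_vector_derivative f1 x) (at x within {min (y - R) y..max (y - R) y})"
      using d1[of x] by (simp add: has_real_derivative_iff_has_vector_derivative has_vector_derivative_at_within)
  qed
  also have "f (y - R) = 0" by (rule z0) (simp add: R_def)
  finally show ?thesis by simp
qed

lemma beta_kernel:
  assumes m: "0 < \<mu>" "\<mu> < 1" and r: "0 < r"
  shows "(\<integral>s. KK \<mu> (r - s) * KK (1 - \<mu>) s \<partial>lborel) = Beta \<mu> (1 - \<mu>)"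
proof -
  have "(\<integral>s. KK \<mu> (r - s) * KK (1 - \<mu>) s \<partial>lborel)
      = \<bar>r\<bar> *\<^sub>R (\<integral>u. KK \<mu> (r - (0 + r * u)) * KK (1 - \<mu>) (0 + r * u) \<partial>lborel)"
    by (rule lborel_integral_real_affine) (use r in simp)
  also have "\<dots> = (\<integral>u. r * (KK \<mu> (r - r * u) * KK (1 - \<mu>) (r * u)) \<partial>lborel)"
    using r by simp
  also have "\<dots> = (\<integral>u. indicator {0..1} u *\<^sub>R (u powr (\<mu> - 1) * (1 - u) powr ((1 - \<mu>) - 1)) \<partial>lborel)"
  proof (intro Bochner_Integration.integral_cong refl)
    fix u :: real
    show "r * (KK \<mu> (r - r * u) * KK (1 - \<mu>) (r * u)) =
      indicator {0..1} u *\<^sub>R (u powr (\<mu> - 1) * (1 - u) powr ((1 - \<mu>) - 1))"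
    proof (cases "0 < u \<and> u < 1")
      case True
      have a: "r - r * u = r * (1 - u)" by (simp add: algebra_simps)
      have "r * (KK \<mu> (r - r * u) * KK (1 - \<mu>) (r * u))
          = r * ((r * (1 - u)) powr (- \<mu>) * (r * u) powr (\<mu> - 1))"
        using True r by (simp add: KK_def a)
      also have "\<dots> = (r powr 1 * r powr (- \<mu>) * r powr (\<mu> - 1)) * (u powr (\<mu> - 1) * (1 - u) powr (- \<mu>))"
      proof -
        have p1: "(r * (1 - u)) powr (- \<mu>) = r powr (- \<mu>) * (1 - u) powr (- \<mu>)"
          using True r by (simp add: powr_mult)
        have p2: "(r * u) powr (\<mu> - 1) = r powr (\<mu> - 1) * u powr (\<mu> - 1)"
          using True r by (simp add: powr_mult)
        show ?thesis by (simp only: p1 p2 powr_one[OF less_imp_le[OF r]] mult_ac)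
      qed
      also have "r powr 1 * r powr (- \<mu>) * r powr (\<mu> - 1) = 1"
      proof -
        have "r powr 1 * r powr (- \<mu>) * r powr (\<mu> - 1) = r powr (1 + (- \<mu>) + (\<mu> - 1))"
          by (simp only: powr_add)
        then show ?thesis using r by simp
      qed
      finally show ?thesis using True by (simp add: indicator_def)
    next
      case False
      then consider "u \<le> 0" | "1 \<le> u" by linarith
      then show ?thesis
      proof cases
        case 1
        then have "r * u \<le> 0" using r by (simp add: mult_nonneg_nonpos)
        then show ?thesis using 1 by (auto simp: KK_def indicator_def)
      next
        case 2
        have "r * (1 - u) \<le> 0" using r 2 by (simp add: mult_nonneg_nonpos)
        then have "r - r * u \<le> 0" by (simp add: algebra_simps)
        then show ?thesis using 2 by (auto simp: KK_def indicator_def)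
      qed
    qed
  qed
  also have "\<dots> = integral {0..1} (\<lambda>u. u powr (\<mu> - 1) * (1 - u) powr ((1 - \<mu>) - 1))"
    using set_borel_integral_eq_integral(2)[OF integrable_Beta[of \<mu> "1 - \<mu>"]] m
    by (simp add: set_lebesgue_integral_def)
  also have "\<dots> = Beta \<mu> (1 - \<mu>)"
    by (rule integral_unique[OF has_integral_Beta_real]) (use m in auto)
  finally show ?thesis .
qed

lemma nn_translate:
  fixes g :: "real \<Rightarrow> real" and s :: real
  assumes [measurable]: "g \<in> borel_measurable borel"
  shows "(\<integral>\<^sup>+r. ennreal (g (r - s)) \<partial>lborel) = (\<integral>\<^sup>+x. ennreal (g x) \<partial>lborel)"
proof -
  have "(\<integral>\<^sup>+r. ennreal (g (r - s)) \<partial>lborel) = ennreal \<bar>1\<bar> * (\<integral>\<^sup>+x. ennreal (g (s + 1 * x - s)) \<partial>lborel)"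
    by (rule nn_integral_real_affine) auto
  then show ?thesis by simp
qed

lemma conv_integrable:
  assumes [measurable]: "f1 \<in> borel_measurable borel" and b1: "\<And>x. \<bar>f1 x\<bar> \<le> M1"
    and z1: "\<And>x. x < c \<Longrightarrow> f1 x = 0" and m: "0 < \<mu>" "\<mu> < 1"
  shows "integrable (lborel \<Otimes>\<^sub>M lborel) (\<lambda>(r, s). f1 (y - r) * KK \<mu> (r - s) * KK (1 - \<mu>) s)"
proof (rule integrableI_bounded)
  show "(\<lambda>(r, s). f1 (y - r) * KK \<mu> (r - s) * KK (1 - \<mu>) s) \<in> borel_measurable (lborel \<Otimes>\<^sub>M lborel)"
    by measurable
  define R where "R = max 0 (y - c)"
  define A where "A x = indicator {0<..R} x * KK \<mu> x" for x
  define B where "B x = indicator {0<..R} x * KK (1 - \<mu>) x" for x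
  have [measurable]: "A \<in> borel_measurable borel" "B \<in> borel_measurable borel"
    unfolding A_def B_def by measurable
  have M1: "0 \<le> M1" using b1[of 0] by simp
  have A0: "0 \<le> A x" "0 \<le> B x" for x by (simp_all add: A_def B_def KK_nonneg)
  have bd: "norm (f1 (y - r) * KK \<mu> (r - s) * KK (1 - \<mu>) s) \<le> M1 * A (r - s) * B s" for r s
  proof (cases "f1 (y - r) * KK \<mu> (r - s) * KK (1 - \<mu>) s = 0")
    case True
    have "0 \<le> M1 * A (r - s) * B s" using A0 M1 by simp
    then show ?thesis by (subst True) simp
  next
    case False
    then have "0 < r - s" "0 < s" "c \<le> y - r" using z1[of "y - r"] by (auto simp: KK_def split: if_splits) (meson not_le)
    then have "r - s \<in> {0<..R}" "s \<in> {0<..R}" by (auto simp: R_def)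
    then show ?thesis using b1[of "y - r"]
      by (simp add: A_def B_def abs_mult KK_nonneg mult_right_mono)
  qed
  have "(\<integral>\<^sup>+z. ennreal (norm ((\<lambda>(r, s). f1 (y - r) * KK \<mu> (r - s) * KK (1 - \<mu>) s) z)) \<partial>(lborel \<Otimes>\<^sub>M lborel))
      \<le> (\<integral>\<^sup>+z. ennreal ((\<lambda>(r, s). M1 * A (r - s) * B s) z) \<partial>(lborel \<Otimes>\<^sub>M lborel))"
    using bd by (intro nn_integral_mono) (auto intro!: ennreal_leI simp del: norm_mult simp add: case_prod_beta)
  also have "\<dots> = (\<integral>\<^sup>+s. \<integral>\<^sup>+r. ennreal (M1 * A (r - s) * B s) \<partial>lborel \<partial>lborel)"
    by (subst lborel_pair.nn_integral_snd[symmetric]) (auto simp: case_prod_beta)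
  also have "\<dots> = (\<integral>\<^sup>+s. ennreal (M1 * B s) * (\<integral>\<^sup>+r. ennreal (A (r - s)) \<partial>lborel) \<partial>lborel)"
  proof (intro nn_integral_cong)
    fix s
    have "(\<integral>\<^sup>+r. ennreal (M1 * A (r - s) * B s) \<partial>lborel) = (\<integral>\<^sup>+r. ennreal (M1 * B s) * ennreal (A (r - s)) \<partial>lborel)"
      by (intro nn_integral_cong) (simp add: ennreal_mult'[symmetric] A0 M1 mult_ac)
    also have "\<dots> = ennreal (M1 * B s) * (\<integral>\<^sup>+r. ennreal (A (r - s)) \<partial>lborel)"
      by (rule nn_integral_cmult) measurable
    finally show "(\<integral>\<^sup>+r. ennreal (M1 * A (r - s) * B s) \<partial>lborel) = ennreal (M1 * B s) * (\<integral>\<^sup>+r. ennreal (A (r - s)) \<partial>lborel)" .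
  qed
  also have "\<dots> = (\<integral>\<^sup>+s. ennreal (M1 * B s) * ennreal (R powr (1-\<mu>)/(1-\<mu>)) \<partial>lborel)"
  proof -
    have tA: "(\<integral>\<^sup>+r. ennreal (A (r - s)) \<partial>lborel) = ennreal (R powr (1-\<mu>)/(1-\<mu>))" for s
      using nn_translate[of A s] KK_nn_int[of \<mu> R] m by (simp add: A_def R_def)
    show ?thesis by (simp add: tA)
  qed
  also have "\<dots> = (\<integral>\<^sup>+s. ennreal (B s) \<partial>lborel) * ennreal M1 * ennreal (R powr (1-\<mu>)/(1-\<mu>))"
  proof -
    have "(\<integral>\<^sup>+s. ennreal (M1 * B s) * ennreal (R powr (1-\<mu>)/(1-\<mu>)) \<partial>lborel)
       = (\<integral>\<^sup>+s. ennreal (B s) * (ennreal M1 * ennreal (R powr (1-\<mu>)/(1-\<mu>))) \<partial>lborel)"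
      by (intro nn_integral_cong) (simp add: ennreal_mult' A0 M1 mult_ac)
    also have "\<dots> = (\<integral>\<^sup>+s. ennreal (B s) \<partial>lborel) * (ennreal M1 * ennreal (R powr (1-\<mu>)/(1-\<mu>)))"
      by (rule nn_integral_multc) measurable
    finally show ?thesis by (simp add: mult_ac)
  qed
  also have "\<dots> < \<infinity>"
    using KK_nn_int[of "1 - \<mu>" R] m by (simp add: B_def R_def ennreal_mult_less_top)
  finally show "(\<integral>\<^sup>+z. ennreal (norm ((\<lambda>(r, s). f1 (y - r) * KK \<mu> (r - s) * KK (1 - \<mu>) s) z)) \<partial>(lborel \<Otimes>\<^sub>M lborel)) < \<infinity>" .
qed

lemma inv_formula:
  assumes d1: "\<And>x. (f has_real_derivative f1 x) (at x)" and c1: "continuous_on UNIV f1"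
    and b1: "\<And>x. \<bar>f1 x\<bar> \<le> M1"
    and z0: "\<And>x. x < c \<Longrightarrow> f x = 0" and z1: "\<And>x. x < c \<Longrightarrow> f1 x = 0"
    and m: "0 < \<mu>" "\<mu> < 1"
  shows "(\<integral>s. FK \<mu> f1 (y - s) * KK (1 - \<mu>) s \<partial>lborel) = Beta \<mu> (1 - \<mu>) * f y"
proof -
  have [measurable]: "f1 \<in> borel_measurable borel" using c1 by (rule borel_measurable_continuous_onI)
  define H where "H r s = f1 (y - r) * KK \<mu> (r - s) * KK (1 - \<mu>) s" for r s
  have s1: "FK \<mu> f1 (y - s) * KK (1 - \<mu>) s = (\<integral>r. H r s \<partial>lborel)" for s
  proof -
    have "FK \<mu> f1 (y - s) = \<bar>1\<bar> *\<^sub>R (\<integral>r. f1 (y - s - (- s + 1 * r)) * KK \<mu> (- s + 1 * r) \<partial>lborel)"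
      unfolding FK_def by (rule lborel_integral_real_affine) simp
    also have "\<dots> = (\<integral>r. f1 (y - r) * KK \<mu> (r - s) \<partial>lborel)" by simp
    finally show ?thesis by (simp add: H_def)
  qed
  have "(\<integral>s. FK \<mu> f1 (y - s) * KK (1 - \<mu>) s \<partial>lborel) = (\<integral>s. (\<integral>r. H r s \<partial>lborel) \<partial>lborel)"
    by (simp add: s1)
  also have "\<dots> = (\<integral>r. (\<integral>s. H r s \<partial>lborel) \<partial>lborel)"
    by (rule lborel_pair.Fubini_integral) (unfold H_def, rule conv_integrable[OF _ b1 z1 m], simp)
  also have "\<dots> = (\<integral>r. Beta \<mu> (1 - \<mu>) * (f1 (y - r) * KK 0 r) \<partial>lborel)"
  proof (intro Bochner_Integration.integral_cong refl)
    fix r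
    have "(\<integral>s. H r s \<partial>lborel) = f1 (y - r) * (\<integral>s. KK \<mu> (r - s) * KK (1 - \<mu>) s \<partial>lborel)"
      by (simp add: H_def mult.assoc)
    also have "\<dots> = Beta \<mu> (1 - \<mu>) * (f1 (y - r) * KK 0 r)"
    proof (cases "0 < r")
      case True then show ?thesis using beta_kernel[OF m True] by (simp add: KK_def)
    next
      case False
      have z: "(\<lambda>s. KK \<mu> (r - s) * KK (1 - \<mu>) s) = (\<lambda>s. 0)" using False by (auto simp: KK_def)
      have "(\<integral>s. KK \<mu> (r - s) * KK (1 - \<mu>) s \<partial>lborel) = 0" by (simp only: z) simp
      then show ?thesis using False by (simp add: KK_def)
    qed
    finally show "(\<integral>s. H r s \<partial>lborel) = Beta \<mu> (1 - \<mu>) * (f1 (y - r) * KK 0 r)" .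
  qed
  also have "\<dots> = Beta \<mu> (1 - \<mu>) * FK 0 f1 y" by (simp add: FK_def)
  also have "FK 0 f1 y = f y" by (rule FK0_inv[OF d1 z0 z1 c1])
  finally show ?thesis .
qed



lemma abs_integral_le_nn:
  "ennreal \<bar>\<integral>s. X s \<partial>lborel\<bar> \<le> (\<integral>\<^sup>+s. ennreal \<bar>X s\<bar> \<partial>lborel)"
proof (cases "integrable lborel X")
  case True
  then show ?thesis using integral_norm_bound_ennreal[OF True] by simp
next
  case False then show ?thesis by (simp add: not_integrable_integral_eq)
qed

lemma L2_step:
  fixes g f :: "real \<Rightarrow> real"
  assumes gc: "continuous_on UNIV g" and gz: "\<And>x. x \<le> A \<Longrightarrow> g x = 0"
    and m: "0 < \<mu>" "\<mu> \<le> 1" and AB: "A < B"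
    and rep: "\<And>y. y \<in> {A<..<B} \<Longrightarrow> f y = C0 * (\<integral>s. g (y - s) * KK (1 - \<mu>) s \<partial>lborel)"
  shows "(\<integral>\<^sup>+y. ennreal (indicator {A<..<B} y * (f y)\<^sup>2) \<partial>lborel)
     \<le> ennreal (C0\<^sup>2 * ((B - A) powr \<mu> / \<mu>)\<^sup>2) * (\<integral>\<^sup>+y. ennreal (indicator {A<..<B} y * (g y)\<^sup>2) \<partial>lborel)"
proof -
  have [measurable]: "g \<in> borel_measurable borel" using gc by (rule borel_measurable_continuous_onI)
  define L where "L = B - A"
  define k where "k = KK (1 - \<mu>)"
  define M where "M = L powr \<mu> / \<mu>"
  have [measurable]: "k \<in> borel_measurable borel" unfolding k_def by measurable
  have k0: "0 \<le> k s" for s by (simp add: k_def KK_nonneg)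
  have L0: "0 \<le> L" using AB by (simp add: L_def)
  have M0: "0 \<le> M" using m by (simp add: M_def)
  have Mint: "(\<integral>\<^sup>+s. ennreal (indicator {0<..L} s * k s) \<partial>lborel) = ennreal M"
    using KK_nn_int[of "1 - \<mu>" L] m L0 by (simp add: k_def M_def)
  define G2 where "G2 = (\<integral>\<^sup>+x. ennreal (indicator {A<..<B} x * (g x)\<^sup>2) \<partial>lborel)"
  have pw: "ennreal (indicator {A<..<B} y * (f y)\<^sup>2)
      \<le> ennreal (C0\<^sup>2 * M) * (\<integral>\<^sup>+s. ennreal (indicator {A<..<B} y * (indicator {0<..L} s * k s * (g (y - s))\<^sup>2)) \<partial>lborel)" for y
  proof (cases "y \<in> {A<..<B}")
    case False then show ?thesis by simp
  next
    case True
    define X where "X s = g (y - s) * k s" for s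
    define P where "P s = ennreal (sqrt (k s) * \<bar>g (y - s)\<bar>)" for s
    define Q where "Q s = ennreal (sqrt (k s) * indicator {0<..L} s)" for s
    have [measurable]: "P \<in> borel_measurable lborel" "Q \<in> borel_measurable lborel"
      unfolding P_def Q_def by measurable
    have XPQ: "ennreal \<bar>X s\<bar> = P s * Q s" for s
    proof (cases "0 < s \<and> s \<le> L")
      case True
      have "\<bar>X s\<bar> = (sqrt (k s) * \<bar>g (y - s)\<bar>) * (sqrt (k s) * indicator {0<..L} s)"
        using True k0[of s] by (simp add: X_def abs_mult mult_ac)
      moreover have "ennreal ((sqrt (k s) * \<bar>g (y - s)\<bar>) * (sqrt (k s) * indicator {0<..L} s))
          = ennreal (sqrt (k s) * \<bar>g (y - s)\<bar>) * ennreal (sqrt (k s) * indicator {0<..L} s)"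
        by (rule ennreal_mult') (simp add: k0)
      ultimately show ?thesis unfolding P_def Q_def by simp
    next
      case False
      then have "s \<le> 0 \<or> y - s \<le> A" using True by (auto simp: L_def)
      then have "X s = 0" using gz[of "y - s"] by (auto simp: X_def k_def KK_def)
      moreover have "P s * Q s = 0"
        using False \<open>s \<le> 0 \<or> y - s \<le> A\<close> gz[of "y - s"] by (auto simp: P_def Q_def k_def KK_def)
      ultimately show ?thesis by simp
    qed
    have "ennreal (indicator {A<..<B} y * (f y)\<^sup>2) = ennreal (C0\<^sup>2) * ennreal (\<bar>\<integral>s. X s \<partial>lborel\<bar>) ^ 2"
      using True rep[OF True] by (simp add: X_def k_def power_mult_distrib ennreal_power ennreal_mult')
    also have "\<dots> \<le> ennreal (C0\<^sup>2) * (\<integral>\<^sup>+s. P s * Q s \<partial>lborel) ^ 2"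
      using abs_integral_le_nn[of X] by (intro mult_left_mono power_mono) (simp_all add: XPQ)
    also have "\<dots> \<le> ennreal (C0\<^sup>2) * ((\<integral>\<^sup>+s. P s ^ 2 \<partial>lborel) * (\<integral>\<^sup>+s. Q s ^ 2 \<partial>lborel))"
      by (intro mult_left_mono Cauchy_Schwarz_nn_integral) auto
    also have "(\<integral>\<^sup>+s. Q s ^ 2 \<partial>lborel) = ennreal M"
      unfolding Mint[symmetric] Q_def
      by (intro nn_integral_cong) (simp add: ennreal_power power_mult_distrib k0 indicator_def)
    also have "(\<integral>\<^sup>+s. P s ^ 2 \<partial>lborel) = (\<integral>\<^sup>+s. ennreal (indicator {A<..<B} y * (indicator {0<..L} s * k s * (g (y - s))\<^sup>2)) \<partial>lborel)"
    proof (intro nn_integral_cong)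
      fix s
      show "P s ^ 2 = ennreal (indicator {A<..<B} y * (indicator {0<..L} s * k s * (g (y - s))\<^sup>2))"
      proof (cases "0 < s \<and> s \<le> L")
        case True
        then show ?thesis using \<open>y \<in> {A<..<B}\<close> k0[of s]
          by (simp add: P_def ennreal_power power_mult_distrib)
      next
        case False
        then have "s \<le> 0 \<or> y - s \<le> A" using \<open>y \<in> {A<..<B}\<close> by (auto simp: L_def)
        then show ?thesis using False gz[of "y - s"] by (auto simp: P_def k_def KK_def)
      qed
    qed
    finally show ?thesis by (simp add: ennreal_mult'[OF M0] mult_ac)
  qed
  have "(\<integral>\<^sup>+y. ennreal (indicator {A<..<B} y * (f y)\<^sup>2) \<partial>lborel)
      \<le> (\<integral>\<^sup>+y. ennreal (C0\<^sup>2 * M) * (\<integral>\<^sup>+s. ennreal (indicator {A<..<B} y * (indicator {0<..L} s * k s * (g (y - s))\<^sup>2)) \<partial>lborel) \<partial>lborel)"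
    by (intro nn_integral_mono pw)
  also have "\<dots> = ennreal (C0\<^sup>2 * M) * (\<integral>\<^sup>+y. (\<integral>\<^sup>+s. ennreal (indicator {A<..<B} y * (indicator {0<..L} s * k s * (g (y - s))\<^sup>2)) \<partial>lborel) \<partial>lborel)"
    by (rule nn_integral_cmult) measurable
  also have "(\<integral>\<^sup>+y. (\<integral>\<^sup>+s. ennreal (indicator {A<..<B} y * (indicator {0<..L} s * k s * (g (y - s))\<^sup>2)) \<partial>lborel) \<partial>lborel)
      = (\<integral>\<^sup>+s. (\<integral>\<^sup>+y. ennreal (indicator {A<..<B} y * (indicator {0<..L} s * k s * (g (y - s))\<^sup>2)) \<partial>lborel) \<partial>lborel)"
    by (rule lborel_pair.Fubini') measurable
  also have "\<dots> \<le> (\<integral>\<^sup>+s. ennreal (indicator {0<..L} s * k s) * G2 \<partial>lborel)"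
  proof (intro nn_integral_mono)
    fix s
    have "(\<integral>\<^sup>+y. ennreal (indicator {A<..<B} y * (indicator {0<..L} s * k s * (g (y - s))\<^sup>2)) \<partial>lborel)
        \<le> (\<integral>\<^sup>+y. ennreal (indicator {0<..L} s * k s) * ennreal (indicator {A<..<B} (y - s) * (g (y - s))\<^sup>2) \<partial>lborel)"
    proof (intro nn_integral_mono)
      fix y
      show "ennreal (indicator {A<..<B} y * (indicator {0<..L} s * k s * (g (y - s))\<^sup>2))
          \<le> ennreal (indicator {0<..L} s * k s) * ennreal (indicator {A<..<B} (y - s) * (g (y - s))\<^sup>2)"
      proof (cases "0 < s \<and> s \<le> L \<and> y \<in> {A<..<B}")
        case True
        show ?thesis
        proof (cases "y - s \<le> A")
          case True then show ?thesis using gz[of "y - s"] by simp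
        next
          case False
          then have "y - s \<in> {A<..<B}" using True by auto
          then show ?thesis using True k0[of s] by (simp add: ennreal_mult'[symmetric])
        qed
      next
        case False then show ?thesis by (auto simp: indicator_def)
      qed
    qed
    also have "\<dots> = ennreal (indicator {0<..L} s * k s) * (\<integral>\<^sup>+y. ennreal (indicator {A<..<B} (y - s) * (g (y - s))\<^sup>2) \<partial>lborel)"
      by (rule nn_integral_cmult) measurable
    also have "(\<integral>\<^sup>+y. ennreal (indicator {A<..<B} (y - s) * (g (y - s))\<^sup>2) \<partial>lborel) = G2"
      unfolding G2_def by (rule nn_translate[of "\<lambda>x. indicator {A<..<B} x * (g x)\<^sup>2"]) measurable
    finally show "(\<integral>\<^sup>+y. ennreal (indicator {A<..<B} y * (indicator {0<..L} s * k s * (g (y - s))\<^sup>2)) \<partial>lborel)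
        \<le> ennreal (indicator {0<..L} s * k s) * G2" .
  qed
  also have "\<dots> = ennreal M * G2"
    by (subst nn_integral_multc) (simp_all add: Mint)
  finally have "(\<integral>\<^sup>+y. ennreal (indicator {A<..<B} y * (f y)\<^sup>2) \<partial>lborel) \<le> ennreal (C0\<^sup>2 * M) * (ennreal M * G2)"
    by (simp add: mult_left_mono)
  also have "ennreal (C0\<^sup>2 * M) * (ennreal M * G2) = (ennreal (C0\<^sup>2 * M) * ennreal M) * G2"
    by (simp only: mult.assoc)
  also have "ennreal (C0\<^sup>2 * M) * ennreal M = ennreal (C0\<^sup>2 * M\<^sup>2)"
  proof -
    have "ennreal (C0\<^sup>2 * M) * ennreal M = ennreal (C0\<^sup>2 * M * M)"
      by (rule ennreal_mult[symmetric]) (use M0 in auto)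
    then show ?thesis by (simp add: power2_eq_square mult_ac)
  qed
  finally show ?thesis by (simp only: G2_def M_def L_def)
qed



lemma deriv_zero_outside:
  assumes d: "\<And>x. (f has_real_derivative f' x) (at x)" and z: "\<And>x. x \<notin> {c..d} \<Longrightarrow> f x = 0"
    and x: "x \<notin> {c..d}"
  shows "f' x = 0"
proof -
  have "((\<lambda>_. 0) has_real_derivative f' x) (at x)"
    by (rule has_field_derivative_transform_within_open[OF d[of x], of "- {c..d}"]) (use x z in auto)
  moreover have "((\<lambda>_. 0) has_real_derivative 0) (at x)" by simp
  ultimately show ?thesis by (rule DERIV_unique)
qed

lemma bounded_supp:
  fixes f :: "real \<Rightarrow> real"
  assumes "continuous_on UNIV f" and z: "\<And>x. x \<notin> {c..d} \<Longrightarrow> f x = 0"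
  shows "\<exists>M. \<forall>x. \<bar>f x\<bar> \<le> M"
proof -
  have "bounded (f ` {c..d})"
    by (intro compact_imp_bounded compact_continuous_image continuous_on_subset[OF assms(1)]) auto
  then obtain B where B: "\<And>y. y \<in> f ` {c..d} \<Longrightarrow> norm y \<le> B" by (auto simp: bounded_iff)
  have "\<bar>f x\<bar> \<le> max B 0" for x
    using B[of "f x"] z[of x] by (cases "x \<in> {c..d}") auto
  then show ?thesis by blast
qed

lemma deriv_mirror_fun:
  assumes "\<And>x. (F has_real_derivative F' x) (at x)"
  shows "deriv (\<lambda>y. F (- y)) = (\<lambda>x. - F' (- x))"
proof
  fix x
  have "((\<lambda>y. F (- y)) has_real_derivative - F' (- x)) (at x)"
    using assms[of "-x"] DERIV_mirror by blast
  then show "deriv (\<lambda>y. F (- y)) x = - F' (- x)" by (rule DERIV_imp_deriv)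
qed

lemma ord_n_lt1: "0 \<le> \<mu> \<Longrightarrow> \<mu> < 1 \<Longrightarrow> ord_n \<mu> = 1"
  unfolding ord_n_def by (simp add: floor_eq_iff)

lemma ord_n_1: "ord_n 1 = 2"
  unfolding ord_n_def by simp

definition KC :: "real \<Rightarrow> real \<Rightarrow> real" where
  "KC \<mu> L = (if \<mu> < 1 then (1 / Beta \<mu> (1 - \<mu>))\<^sup>2 else 1) * (L powr \<mu> / \<mu>)\<^sup>2"

lemma KC_nonneg: "0 \<le> KC \<mu> L"
  by (simp add: KC_def)

lemma core:
  assumes d1: "\<And>x. (f0 has_real_derivative f1 x) (at x)"
    and d2: "\<And>x. (f1 has_real_derivative f2 x) (at x)"
    and d3: "\<And>x. (f2 has_real_derivative f3 x) (at x)"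
    and c3: "continuous_on UNIV f3"
    and z: "\<And>x. x \<notin> {c..d} \<Longrightarrow> f0 x = 0" and Ac: "A < c" and dB: "d < B" and AB: "A < B"
    and m: "0 < \<mu>" "\<mu> \<le> 1"
  shows "\<exists>g. continuous_on UNIV g \<and>
     (deriv ^^ ord_n \<mu>) (FK (\<mu> - real (ord_n \<mu>) + 1) f0) = g \<and>
     (deriv ^^ ord_n \<mu>) (\<lambda>y. FK (\<mu> - real (ord_n \<mu>) + 1) f0 (- y)) = (\<lambda>x. (-1) ^ ord_n \<mu> * g (- x)) \<and>
     (\<integral>\<^sup>+y. ennreal (indicator {A<..<B} y * (f0 y)\<^sup>2) \<partial>lborel)
       \<le> ennreal (KC \<mu> (B - A)) * (\<integral>\<^sup>+y. ennreal (indicator {A<..<B} y * (g y)\<^sup>2) \<partial>lborel)"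
proof -
  have c0: "continuous_on UNIV f0" and c1: "continuous_on UNIV f1" and c2: "continuous_on UNIV f2"
    using deriv_cont[OF d1] deriv_cont[OF d2] deriv_cont[OF d3] by auto
  have z1: "\<And>x. x \<notin> {c..d} \<Longrightarrow> f1 x = 0" by (rule deriv_zero_outside[OF d1 z])
  have z2: "\<And>x. x \<notin> {c..d} \<Longrightarrow> f2 x = 0" by (rule deriv_zero_outside[OF d2 z1])
  have z3: "\<And>x. x \<notin> {c..d} \<Longrightarrow> f3 x = 0" by (rule deriv_zero_outside[OF d3 z2])
  obtain M0 where b0: "\<And>x. \<bar>f0 x\<bar> \<le> M0" using bounded_supp[OF c0 z] by blast
  obtain M1 where b1: "\<And>x. \<bar>f1 x\<bar> \<le> M1" using bounded_supp[OF c1 z1] by blast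
  obtain M2 where b2: "\<And>x. \<bar>f2 x\<bar> \<le> M2" using bounded_supp[OF c2 z2] by blast
  obtain M3 where b3: "\<And>x. \<bar>f3 x\<bar> \<le> M3" using bounded_supp[OF c3 z3] by blast
  have l0: "\<And>x. x < c \<Longrightarrow> f0 x = 0" using z by auto
  have l1: "\<And>x. x < c \<Longrightarrow> f1 x = 0" using z1 by auto
  have l2: "\<And>x. x < c \<Longrightarrow> f2 x = 0" using z2 by auto
  show ?thesis
  proof (cases "\<mu> < 1")
    case True
    have n: "ord_n \<mu> = 1" using ord_n_lt1[of \<mu>] True m by simp
    have e: "\<mu> - real (ord_n \<mu>) + 1 = \<mu>" using n by simp
    have D0: "(FK \<mu> f0 has_real_derivative FK \<mu> f1 y) (at y)" for y
      by (rule FK_deriv[OF d1 d2 b0 b1 b2 l0 l1]) (use m True in auto)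
    have D1: "(FK \<mu> f1 has_real_derivative FK \<mu> f2 y) (at y)" for y
      by (rule FK_deriv[OF d2 d3 b1 b2 b3 l1 l2]) (use m True in auto)
    define g where "g = FK \<mu> f1"
    have gc: "continuous_on UNIV g" unfolding g_def by (rule deriv_cont[OF D1])
    have gd: "deriv (FK \<mu> f0) = g" unfolding g_def by (rule ext, rule DERIV_imp_deriv[OF D0])
    have gm: "deriv (\<lambda>y. FK \<mu> f0 (- y)) = (\<lambda>x. - g (- x))"
      unfolding g_def by (rule deriv_mirror_fun[OF D0])
    have gz: "g x = 0" if "x \<le> A" for x
    proof -
      have "(\<lambda>t. f1 (x - t) * KK \<mu> t) = (\<lambda>t. 0)"
        using that Ac l1 by (auto simp: KK_def)
      then show ?thesis by (simp add: g_def FK_def)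
    qed
    have Bpos: "0 < Beta \<mu> (1 - \<mu>)" using m True by (simp add: Beta_def)
    have rep: "f0 y = (1 / Beta \<mu> (1 - \<mu>)) * (\<integral>s. g (y - s) * KK (1 - \<mu>) s \<partial>lborel)" for y
      using inv_formula[OF d1 c1 b1 l0 l1 m(1) True, where y=y] Bpos by (simp add: g_def field_simps)
    have L2: "(\<integral>\<^sup>+y. ennreal (indicator {A<..<B} y * (f0 y)\<^sup>2) \<partial>lborel)
      \<le> ennreal ((1 / Beta \<mu> (1 - \<mu>))\<^sup>2 * ((B - A) powr \<mu> / \<mu>)\<^sup>2) * (\<integral>\<^sup>+y. ennreal (indicator {A<..<B} y * (g y)\<^sup>2) \<partial>lborel)"
      by (rule L2_step[OF gc gz m AB]) (use rep in auto)
    show ?thesis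
      by (rule exI[of _ g]) (use gc gd gm L2 True in \<open>simp add: n e KC_def\<close>)
  next
    case False
    then have m1: "\<mu> = 1" using m by simp
    have n: "ord_n \<mu> = 2" using m1 ord_n_1 by simp
    have e: "\<mu> - real (ord_n \<mu>) + 1 = 0" using n m1 by simp
    have D0: "(FK 0 f0 has_real_derivative FK 0 f1 y) (at y)" for y
      by (rule FK_deriv[OF d1 d2 b0 b1 b2 l0 l1]) auto
    have F1: "FK 0 f1 = f0" by (rule ext, rule FK0_inv[OF d1 l0 l1 c1])
    have gd: "(deriv ^^ 2) (FK 0 f0) = f1"
    proof -
      have "deriv (FK 0 f0) = f0" using DERIV_imp_deriv[OF D0] F1 by auto
      then show ?thesis using DERIV_imp_deriv[OF d1] by (auto simp: numeral_2_eq_2)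
    qed
    have gm: "(deriv ^^ 2) (\<lambda>y. FK 0 f0 (- y)) = (\<lambda>x. (-1) ^ 2 * f1 (- x))"
    proof -
      have "deriv (\<lambda>y. FK 0 f0 (- y)) = (\<lambda>x. - f0 (- x))"
        using deriv_mirror_fun[OF D0] F1 by simp
      moreover have "deriv (\<lambda>x. - f0 (- x)) = (\<lambda>x. f1 (- x))"
      proof
        fix x
        have "((\<lambda>y. f0 (- y)) has_real_derivative - f1 (- x)) (at x)"
          using d1[of "-x"] DERIV_mirror by blast
        then have "((\<lambda>y. - f0 (- y)) has_real_derivative f1 (- x)) (at x)"
          using DERIV_minus by fastforce
        then show "deriv (\<lambda>x. - f0 (- x)) x = f1 (- x)" by (rule DERIV_imp_deriv)
      qed
      ultimately show ?thesis by (simp add: numeral_2_eq_2)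
    qed
    have gz: "f1 x = 0" if "x \<le> A" for x using that Ac l1 by auto
    have rep: "f0 y = 1 * (\<integral>s. f1 (y - s) * KK (1 - \<mu>) s \<partial>lborel)" for y
      using F1 m1 by (simp add: FK_def fun_eq_iff)
    have L2: "(\<integral>\<^sup>+y. ennreal (indicator {A<..<B} y * (f0 y)\<^sup>2) \<partial>lborel)
      \<le> ennreal (1\<^sup>2 * ((B - A) powr \<mu> / \<mu>)\<^sup>2) * (\<integral>\<^sup>+y. ennreal (indicator {A<..<B} y * (f1 y)\<^sup>2) \<partial>lborel)"
      by (rule L2_step[OF c1 gz m AB]) (use rep in auto)
    show ?thesis
      by (rule exI[of _ f1]) (use c1 gd gm L2 m1 in \<open>simp add: ord_n_1 KC_def\<close>)
  qed
qed



lemma LBINT_left: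
  fixes a c y e :: real and h :: "real \<Rightarrow> real"
  assumes z: "\<And>x. x < c \<Longrightarrow> h x = 0" and ac: "a < c"
  shows "(LBINT \<xi>=a..y. h \<xi> / (y - \<xi>) powr e) = FK e h y"
proof (cases "a \<le> y")
  case True
  have "(LBINT \<xi>=a..y. h \<xi> / (y - \<xi>) powr e) = (\<integral>\<xi>. indicator {a<..<y} \<xi> *\<^sub>R (h \<xi> / (y - \<xi>) powr e) \<partial>lborel)"
    using True by (simp add: interval_lebesgue_integral_def set_lebesgue_integral_def)
  also have "\<dots> = \<bar>-1\<bar> *\<^sub>R (\<integral>t. indicator {a<..<y} (y + (-1) * t) *\<^sub>R (h (y + (-1) * t) / (y - (y + (-1) * t)) powr e) \<partial>lborel)"
    by (rule lborel_integral_real_affine) simp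
  also have "\<dots> = (\<integral>t. h (y - t) * KK e t \<partial>lborel)"
  proof -
    have "indicator {a<..<y} (y + (-1) * t) *\<^sub>R (h (y + (-1) * t) / (y - (y + (-1) * t)) powr e) = h (y - t) * KK e t" for t
    proof (cases "0 < t")
      case True
      show ?thesis
      proof (cases "a < y - t")
        case True
        then show ?thesis using \<open>0 < t\<close> by (simp add: KK_def indicator_def powr_minus_divide)
      next
        case False
        then show ?thesis using \<open>0 < t\<close> z[of "y - t"] ac by (simp add: KK_def indicator_def)
      qed
    next
      case False then show ?thesis by (simp add: KK_def indicator_def)
    qed
    then show ?thesis by simp
  qed
  finally show ?thesis by (simp add: FK_def)
next
  case False
  have "(\<lambda>\<xi>. indicator {y<..<a} \<xi> *\<^sub>R (h \<xi> / (y - \<xi>) powr e)) = (\<lambda>\<xi>. 0)"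
    using z ac by (auto simp: indicator_def fun_eq_iff)
  moreover have "(\<lambda>t. h (y - t) * KK e t) = (\<lambda>t. 0)"
    using z ac False by (auto simp: KK_def fun_eq_iff)
  ultimately show ?thesis using False
    by (simp add: interval_lebesgue_integral_def set_lebesgue_integral_def FK_def)
qed

lemma LBINT_right:
  fixes b d y e :: real and h :: "real \<Rightarrow> real"
  assumes z: "\<And>x. d < x \<Longrightarrow> h x = 0" and db: "d < b"
  shows "(LBINT \<xi>=y..b. h \<xi> / (\<xi> - y) powr e) = FK e (\<lambda>z. h (- z)) (- y)"
proof (cases "y \<le> b")
  case True
  have "(LBINT \<xi>=y..b. h \<xi> / (\<xi> - y) powr e) = (\<integral>\<xi>. indicator {y<..<b} \<xi> *\<^sub>R (h \<xi> / (\<xi> - y) powr e) \<partial>lborel)"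
    using True by (simp add: interval_lebesgue_integral_def set_lebesgue_integral_def)
  also have "\<dots> = \<bar>1\<bar> *\<^sub>R (\<integral>t. indicator {y<..<b} (y + 1 * t) *\<^sub>R (h (y + 1 * t) / ((y + 1 * t) - y) powr e) \<partial>lborel)"
    by (rule lborel_integral_real_affine) simp
  also have "\<dots> = (\<integral>t. h (- (- y - t)) * KK e t \<partial>lborel)"
  proof -
    have "indicator {y<..<b} (y + 1 * t) *\<^sub>R (h (y + 1 * t) / ((y + 1 * t) - y) powr e) = h (- (- y - t)) * KK e t" for t
    proof (cases "0 < t")
      case True
      show ?thesis
      proof (cases "y + t < b")
        case True
        then show ?thesis using \<open>0 < t\<close> by (simp add: KK_def indicator_def powr_minus_divide add.commute)
      next
        case False
        then show ?thesis using \<open>0 < t\<close> z[of "y + t"] db by (simp add: KK_def indicator_def add.commute)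
      qed
    next
      case False then show ?thesis by (simp add: KK_def indicator_def)
    qed
    then show ?thesis by simp
  qed
  finally show ?thesis by (simp add: FK_def)
next
  case False
  have "(\<lambda>\<xi>. indicator {b<..<y} \<xi> *\<^sub>R (h \<xi> / (\<xi> - y) powr e)) = (\<lambda>\<xi>. 0)"
    using z db by (auto simp: indicator_def fun_eq_iff)
  moreover have "(\<lambda>t. h (- (- y - t)) * KK e t) = (\<lambda>t. 0)"
    using z db False by (auto simp: KK_def fun_eq_iff)
  ultimately show ?thesis using False
    by (simp add: interval_lebesgue_integral_def set_lebesgue_integral_def FK_def)
qed

lemma test_chain:
  assumes "\<phi> \<in> test_fun a b"
  shows "((deriv ^^ k) \<phi> has_real_derivative (deriv ^^ Suc k) \<phi> x) (at x)"
proof -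
  have "(deriv ^^ k) \<phi> differentiable (at x)" using assms by (simp add: test_fun_def)
  then show ?thesis using DERIV_deriv_iff_real_differentiable by force
qed

lemma exp_chain:
  assumes d0: "\<And>x. (p0 has_real_derivative p1 x) (at x)"
    and d1: "\<And>x. (p1 has_real_derivative p2 x) (at x)"
    and d2: "\<And>x. (p2 has_real_derivative p3 x) (at x)"
    and d3: "\<And>x. (p3 has_real_derivative p4 x) (at x)"
  shows "\<And>x. ((\<lambda>x. exp (l * x) * p0 x) has_real_derivative (\<lambda>x. exp (l * x) * (l * p0 x + p1 x)) x) (at x)"
    "\<And>x. ((\<lambda>x. exp (l * x) * (l * p0 x + p1 x)) has_real_derivative (\<lambda>x. exp (l * x) * (l\<^sup>2 * p0 x + 2 * l * p1 x + p2 x)) x) (at x)"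
    "\<And>x. ((\<lambda>x. exp (l * x) * (l\<^sup>2 * p0 x + 2 * l * p1 x + p2 x)) has_real_derivative (\<lambda>x. exp (l * x) * (l ^ 3 * p0 x + 3 * l\<^sup>2 * p1 x + 3 * l * p2 x + p3 x)) x) (at x)"
    "continuous_on UNIV (\<lambda>x. exp (l * x) * (l ^ 3 * p0 x + 3 * l\<^sup>2 * p1 x + 3 * l * p2 x + p3 x))"
proof -
  note [derivative_intros] = d0 d1 d2 d3
  show "\<And>x. ((\<lambda>x. exp (l * x) * p0 x) has_real_derivative (\<lambda>x. exp (l * x) * (l * p0 x + p1 x)) x) (at x)"
    by (auto intro!: derivative_eq_intros simp: algebra_simps)
  show "\<And>x. ((\<lambda>x. exp (l * x) * (l * p0 x + p1 x)) has_real_derivative (\<lambda>x. exp (l * x) * (l\<^sup>2 * p0 x + 2 * l * p1 x + p2 x)) x) (at x)"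
    by (auto intro!: derivative_eq_intros simp: algebra_simps power2_eq_square)
  show "\<And>x. ((\<lambda>x. exp (l * x) * (l\<^sup>2 * p0 x + 2 * l * p1 x + p2 x)) has_real_derivative (\<lambda>x. exp (l * x) * (l ^ 3 * p0 x + 3 * l\<^sup>2 * p1 x + 3 * l * p2 x + p3 x)) x) (at x)"
    by (auto intro!: derivative_eq_intros simp: algebra_simps power2_eq_square power3_eq_cube)
  have c: "continuous_on UNIV p0" "continuous_on UNIV p1" "continuous_on UNIV p2" "continuous_on UNIV p3"
    using deriv_cont[OF d0] deriv_cont[OF d1] deriv_cont[OF d2] deriv_cont[OF d3] by auto
  show "continuous_on UNIV (\<lambda>x. exp (l * x) * (l ^ 3 * p0 x + 3 * l\<^sup>2 * p1 x + 3 * l * p2 x + p3 x))"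
    using c by (intro continuous_intros) auto
qed



definition CL :: "real \<Rightarrow> real \<Rightarrow> real \<Rightarrow> real \<Rightarrow> real" where
  "CL a b lam \<mu> = exp (- 2 * lam * a) * KC \<mu> (b - a) * (Gamma (real (ord_n \<mu>) - \<mu>))\<^sup>2 * exp (2 * lam * b)"

lemma Gamma_ord_pos: "0 < \<mu> \<Longrightarrow> \<mu> \<le> 1 \<Longrightarrow> 0 < Gamma (real (ord_n \<mu>) - \<mu>)"
  by (cases "\<mu> < 1") (auto simp: ord_n_lt1 ord_n_1)

lemma test_supp:
  assumes "\<phi> \<in> test_fun a b"
  obtains c d where "a < c" "d < b" "\<And>x. x \<notin> {c..d} \<Longrightarrow> \<phi> x = 0"
  using assms unfolding test_fun_def by blast

lemma DL_bound:
  fixes a b lam \<mu> :: real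
  assumes ab: "a < b" and lam: "0 \<le> lam" and m: "0 < \<mu>" "\<mu> \<le> 1" and \<phi>: "\<phi> \<in> test_fun a b"
  shows "continuous_on UNIV (DL a \<mu> lam \<phi>) \<and> L2sq a b \<phi> \<le> ennreal (CL a b lam \<mu>) * L2sq a b (DL a \<mu> lam \<phi>)"
proof -
  obtain c d where ac: "a < c" and db: "d < b" and z: "\<And>x. x \<notin> {c..d} \<Longrightarrow> \<phi> x = 0"
    using test_supp[OF \<phi>] by blast
  define p1 where "p1 = (deriv ^^ Suc 0) \<phi>"
  define p2 where "p2 = (deriv ^^ Suc (Suc 0)) \<phi>"
  define p3 where "p3 = (deriv ^^ Suc (Suc (Suc 0))) \<phi>"
  define p4 where "p4 = (deriv ^^ Suc (Suc (Suc (Suc 0)))) \<phi>"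
  have d0: "\<And>x. (\<phi> has_real_derivative p1 x) (at x)" using test_chain[OF \<phi>, of 0] by (simp add: p1_def)
  have d1: "\<And>x. (p1 has_real_derivative p2 x) (at x)" using test_chain[OF \<phi>, of "Suc 0"] by (simp only: p1_def p2_def)
  have d2: "\<And>x. (p2 has_real_derivative p3 x) (at x)" using test_chain[OF \<phi>, of "Suc (Suc 0)"] by (simp only: p2_def p3_def)
  have d3: "\<And>x. (p3 has_real_derivative p4 x) (at x)" using test_chain[OF \<phi>, of "Suc (Suc (Suc 0))"] by (simp only: p3_def p4_def)
  note ec = exp_chain[OF d0 d1 d2 d3, of lam]
  define ch where "ch x = exp (lam * x) * \<phi> x" for x
  have chz: "\<And>x. x \<notin> {c..d} \<Longrightarrow> ch x = 0" using z by (simp add: ch_def)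
  have chd: "\<And>x. (ch has_real_derivative exp (lam * x) * (lam * \<phi> x + p1 x)) (at x)"
    unfolding ch_def by (rule ec(1))
  obtain g where gc: "continuous_on UNIV g"
    and gd: "(deriv ^^ ord_n \<mu>) (FK (\<mu> - real (ord_n \<mu>) + 1) ch) = g"
    and gL: "(\<integral>\<^sup>+y. ennreal (indicator {a<..<b} y * (ch y)\<^sup>2) \<partial>lborel)
       \<le> ennreal (KC \<mu> (b - a)) * (\<integral>\<^sup>+y. ennreal (indicator {a<..<b} y * (g y)\<^sup>2) \<partial>lborel)"
    using core[OF chd ec(2) ec(3) ec(4) chz ac db ab m] by blast
  define Gm where "Gm = Gamma (real (ord_n \<mu>) - \<mu>)"
  have Gm: "0 < Gm" using Gamma_ord_pos[OF m] by (simp add: Gm_def)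
  have inner: "(\<lambda>y. LBINT \<xi>=a..y. exp (lam * \<xi>) * \<phi> \<xi> / (y - \<xi>) powr (\<mu> - real (ord_n \<mu>) + 1))
      = FK (\<mu> - real (ord_n \<mu>) + 1) ch"
  proof
    fix y
    show "(LBINT \<xi>=a..y. exp (lam * \<xi>) * \<phi> \<xi> / (y - \<xi>) powr (\<mu> - real (ord_n \<mu>) + 1))
      = FK (\<mu> - real (ord_n \<mu>) + 1) ch y"
      using LBINT_left[of c ch a y "\<mu> - real (ord_n \<mu>) + 1"] chz ac by (simp add: ch_def)
  qed
  have DLeq: "DL a \<mu> lam \<phi> = (\<lambda>x. exp (- lam * x) / Gm * g x)"
    unfolding DL_def inner gd Gm_def by simp
  have cont: "continuous_on UNIV (DL a \<mu> lam \<phi>)"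
    unfolding DLeq using gc by (intro continuous_intros) (use Gm in auto)
  have [measurable]: "ch \<in> borel_measurable borel" "g \<in> borel_measurable borel"
    "DL a \<mu> lam \<phi> \<in> borel_measurable borel"
    using deriv_cont[OF chd] gc cont by (auto intro: borel_measurable_continuous_onI)
  have "L2sq a b \<phi> \<le> (\<integral>\<^sup>+x. ennreal (exp (- 2 * lam * a)) * ennreal (indicator {a<..<b} x * (ch x)\<^sup>2) \<partial>lborel)"
    unfolding L2sq_def
  proof (intro nn_integral_mono)
    fix x
    show "indicator {a<..<b} x * ennreal ((\<phi> x)\<^sup>2) \<le> ennreal (exp (- 2 * lam * a)) * ennreal (indicator {a<..<b} x * (ch x)\<^sup>2)"
    proof (cases "x \<in> {a<..<b}")
      case True
      have "(\<phi> x)\<^sup>2 = exp (- 2 * lam * x) * (ch x)\<^sup>2"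
        by (simp add: ch_def power_mult_distrib exp_minus field_simps power2_eq_square exp_add[symmetric])
      also have "\<dots> \<le> exp (- 2 * lam * a) * (ch x)\<^sup>2"
        using True lam by (intro mult_right_mono) (auto intro: mult_left_mono)
      finally show ?thesis using True by (simp add: ennreal_mult[symmetric])
    qed simp
  qed
  also have "\<dots> = ennreal (exp (- 2 * lam * a)) * (\<integral>\<^sup>+x. ennreal (indicator {a<..<b} x * (ch x)\<^sup>2) \<partial>lborel)"
    by (rule nn_integral_cmult) measurable
  also have "\<dots> \<le> ennreal (exp (- 2 * lam * a)) * (ennreal (KC \<mu> (b - a)) * (\<integral>\<^sup>+y. ennreal (indicator {a<..<b} y * (g y)\<^sup>2) \<partial>lborel))"
    by (intro mult_left_mono gL) simp
  also have "(\<integral>\<^sup>+y. ennreal (indicator {a<..<b} y * (g y)\<^sup>2) \<partial>lborel)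
      \<le> (\<integral>\<^sup>+y. ennreal (Gm\<^sup>2 * exp (2 * lam * b)) * (indicator {a<..<b} y * ennreal ((DL a \<mu> lam \<phi> y)\<^sup>2)) \<partial>lborel)"
  proof (intro nn_integral_mono)
    fix y
    show "ennreal (indicator {a<..<b} y * (g y)\<^sup>2) \<le> ennreal (Gm\<^sup>2 * exp (2 * lam * b)) * (indicator {a<..<b} y * ennreal ((DL a \<mu> lam \<phi> y)\<^sup>2))"
    proof (cases "y \<in> {a<..<b}")
      case True
      have gy: "g y = Gm * exp (lam * y) * DL a \<mu> lam \<phi> y"
        using Gm by (simp add: DLeq exp_minus field_simps)
      have "(g y)\<^sup>2 = Gm\<^sup>2 * exp (2 * lam * y) * (DL a \<mu> lam \<phi> y)\<^sup>2"
        by (simp add: gy power_mult_distrib power2_eq_square exp_add[symmetric] mult_ac)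
      also have "\<dots> \<le> Gm\<^sup>2 * exp (2 * lam * b) * (DL a \<mu> lam \<phi> y)\<^sup>2"
        using True lam by (intro mult_right_mono mult_left_mono) (auto intro: mult_left_mono)
      finally show ?thesis using True by (simp add: ennreal_mult[symmetric])
    qed simp
  qed
  also have "\<dots> = ennreal (Gm\<^sup>2 * exp (2 * lam * b)) * L2sq a b (DL a \<mu> lam \<phi>)"
    unfolding L2sq_def by (rule nn_integral_cmult) measurable
  finally have "L2sq a b \<phi> \<le> ennreal (exp (- 2 * lam * a)) * (ennreal (KC \<mu> (b - a)) * (ennreal (Gm\<^sup>2 * exp (2 * lam * b)) * L2sq a b (DL a \<mu> lam \<phi>)))"
    by (simp add: mult_left_mono)
  also have "\<dots> = ennreal (CL a b lam \<mu>) * L2sq a b (DL a \<mu> lam \<phi>)"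
    by (simp add: CL_def Gm_def ennreal_mult KC_nonneg mult_ac)
  finally show ?thesis using cont by simp
qed

lemma nn_reflect:
  fixes f :: "real \<Rightarrow> ennreal"
  assumes [measurable]: "f \<in> borel_measurable borel"
  shows "(\<integral>\<^sup>+x. f x \<partial>lborel) = (\<integral>\<^sup>+x. f (- x) \<partial>lborel)"
  using nn_integral_real_affine[of f "-1" 0] by simp

lemma neg1_sq: "(-1::real) ^ n * (-1) ^ n = 1"
  by (simp add: power_mult_distrib[symmetric])

lemma DR_bound:
  fixes a b lam \<mu> :: real
  assumes ab: "a < b" and lam: "0 \<le> lam" and m: "0 < \<mu>" "\<mu> \<le> 1" and \<phi>: "\<phi> \<in> test_fun a b"
  shows "continuous_on UNIV (DR b \<mu> lam \<phi>) \<and> L2sq a b \<phi> \<le> ennreal (CL a b lam \<mu>) * L2sq a b (DR b \<mu> lam \<phi>)"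
proof -
  obtain c d where ac: "a < c" and db: "d < b" and z: "\<And>x. x \<notin> {c..d} \<Longrightarrow> \<phi> x = 0"
    using test_supp[OF \<phi>] by blast
  define p1 where "p1 = (deriv ^^ Suc 0) \<phi>"
  define p2 where "p2 = (deriv ^^ Suc (Suc 0)) \<phi>"
  define p3 where "p3 = (deriv ^^ Suc (Suc (Suc 0))) \<phi>"
  define p4 where "p4 = (deriv ^^ Suc (Suc (Suc (Suc 0)))) \<phi>"
  have d0: "\<And>x. (\<phi> has_real_derivative p1 x) (at x)" using test_chain[OF \<phi>, of 0] by (simp add: p1_def)
  have d1: "\<And>x. (p1 has_real_derivative p2 x) (at x)" using test_chain[OF \<phi>, of "Suc 0"] by (simp only: p1_def p2_def)
  have d2: "\<And>x. (p2 has_real_derivative p3 x) (at x)" using test_chain[OF \<phi>, of "Suc (Suc 0)"] by (simp only: p2_def p3_def)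
  have d3: "\<And>x. (p3 has_real_derivative p4 x) (at x)" using test_chain[OF \<phi>, of "Suc (Suc (Suc 0))"] by (simp only: p3_def p4_def)
  have r0: "((\<lambda>z. \<phi> (- z)) has_real_derivative - p1 (- x)) (at x)" for x
    using d0[of "-x"] DERIV_mirror by blast
  have r1: "((\<lambda>z. - p1 (- z)) has_real_derivative p2 (- x)) (at x)" for x
    using d1[of "-x"] DERIV_mirror DERIV_minus by fastforce
  have r2: "((\<lambda>z. p2 (- z)) has_real_derivative - p3 (- x)) (at x)" for x
    using d2[of "-x"] DERIV_mirror by blast
  have r3: "((\<lambda>z. - p3 (- z)) has_real_derivative p4 (- x)) (at x)" for x
    using d3[of "-x"] DERIV_mirror DERIV_minus by fastforce
  note ec = exp_chain[OF r0 r1 r2 r3, of lam]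
  define ch where "ch x = exp (lam * x) * \<phi> (- x)" for x
  have chz: "\<And>x. x \<notin> {-d..-c} \<Longrightarrow> ch x = 0"
  proof -
    fix x :: real assume "x \<notin> {-d..-c}"
    then have "- x \<notin> {c..d}" by auto
    then show "ch x = 0" using z[of "-x"] by (simp add: ch_def)
  qed
  have chd: "\<And>x. (ch has_real_derivative exp (lam * x) * (lam * \<phi> (- x) + - p1 (- x))) (at x)"
    unfolding ch_def by (rule ec(1))
  obtain g where gc: "continuous_on UNIV g"
    and gd: "(deriv ^^ ord_n \<mu>) (\<lambda>y. FK (\<mu> - real (ord_n \<mu>) + 1) ch (- y)) = (\<lambda>x. (-1) ^ ord_n \<mu> * g (- x))"
    and gL: "(\<integral>\<^sup>+y. ennreal (indicator {-b<..<-a} y * (ch y)\<^sup>2) \<partial>lborel)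
       \<le> ennreal (KC \<mu> (- a - - b)) * (\<integral>\<^sup>+y. ennreal (indicator {-b<..<-a} y * (g y)\<^sup>2) \<partial>lborel)"
  proof -
    have h1: "- b < - d" "- c < - a" "- b < - a" using ac db ab by auto
    show ?thesis using core[OF chd ec(2) ec(3) ec(4) chz h1 m] that by auto
  qed
  define Gm where "Gm = Gamma (real (ord_n \<mu>) - \<mu>)"
  have Gm: "0 < Gm" using Gamma_ord_pos[OF m] by (simp add: Gm_def)
  have inner: "(\<lambda>y. LBINT \<xi>=y..b. exp (- lam * \<xi>) * \<phi> \<xi> / (\<xi> - y) powr (\<mu> - real (ord_n \<mu>) + 1))
      = (\<lambda>y. FK (\<mu> - real (ord_n \<mu>) + 1) ch (- y))"
  proof
    fix y
    have hz: "\<And>x. d < x \<Longrightarrow> exp (- lam * x) * \<phi> x = 0" using z by auto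
    have "(\<lambda>z. exp (- lam * - z) * \<phi> (- z)) = ch" by (simp add: ch_def fun_eq_iff)
    then show "(LBINT \<xi>=y..b. exp (- lam * \<xi>) * \<phi> \<xi> / (\<xi> - y) powr (\<mu> - real (ord_n \<mu>) + 1))
      = FK (\<mu> - real (ord_n \<mu>) + 1) ch (- y)"
      using LBINT_right[of d "\<lambda>x. exp (- lam * x) * \<phi> x" b y "\<mu> - real (ord_n \<mu>) + 1"] hz db by simp
  qed
  have DReq: "DR b \<mu> lam \<phi> = (\<lambda>x. exp (lam * x) / Gm * g (- x))"
  proof
    fix x
    have "DR b \<mu> lam \<phi> x = ((-1) ^ ord_n \<mu> * (-1) ^ ord_n \<mu>) * (exp (lam * x) / Gm * g (- x))"
      unfolding DR_def inner gd Gm_def by (simp add: mult_ac)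
    then show "DR b \<mu> lam \<phi> x = exp (lam * x) / Gm * g (- x)" by (simp only: neg1_sq mult_1)
  qed
  have cont: "continuous_on UNIV (DR b \<mu> lam \<phi>)"
    unfolding DReq using gc Gm
    by (intro continuous_intros continuous_on_compose2[OF gc]) auto
  have [measurable]: "ch \<in> borel_measurable borel" "g \<in> borel_measurable borel"
    "DR b \<mu> lam \<phi> \<in> borel_measurable borel" "\<phi> \<in> borel_measurable borel"
    using deriv_cont[OF chd] gc cont deriv_cont[OF d0] by (auto intro: borel_measurable_continuous_onI)
  have "L2sq a b \<phi> = (\<integral>\<^sup>+x. indicator {a<..<b} (- x) * ennreal ((\<phi> (- x))\<^sup>2) \<partial>lborel)"
    unfolding L2sq_def by (rule nn_reflect[of "\<lambda>x. indicator {a<..<b} x * ennreal ((\<phi> x)\<^sup>2)"]) measurable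
  also have "\<dots> \<le> (\<integral>\<^sup>+x. ennreal (exp (2 * lam * b)) * ennreal (indicator {-b<..<-a} x * (ch x)\<^sup>2) \<partial>lborel)"
  proof (intro nn_integral_mono)
    fix x
    show "indicator {a<..<b} (- x) * ennreal ((\<phi> (- x))\<^sup>2) \<le> ennreal (exp (2 * lam * b)) * ennreal (indicator {-b<..<-a} x * (ch x)\<^sup>2)"
    proof (cases "x \<in> {-b<..<-a}")
      case True
      have "(\<phi> (- x))\<^sup>2 = exp (- 2 * lam * x) * (ch x)\<^sup>2"
        by (simp add: ch_def power_mult_distrib exp_minus field_simps power2_eq_square exp_add[symmetric])
      also have "\<dots> \<le> exp (2 * lam * b) * (ch x)\<^sup>2"
      proof -
        have "lam * (- x) \<le> lam * b" using True lam by (intro mult_left_mono) auto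
        then have "exp (- 2 * lam * x) \<le> exp (2 * lam * b)" by (simp add: mult.commute)
        then show ?thesis by (intro mult_right_mono) auto
      qed
      finally show ?thesis using True by (simp add: ennreal_mult[symmetric] indicator_def)
    qed (auto simp: indicator_def)
  qed
  also have "\<dots> = ennreal (exp (2 * lam * b)) * (\<integral>\<^sup>+x. ennreal (indicator {-b<..<-a} x * (ch x)\<^sup>2) \<partial>lborel)"
    by (rule nn_integral_cmult) measurable
  also have "\<dots> \<le> ennreal (exp (2 * lam * b)) * (ennreal (KC \<mu> (- a - - b)) * (\<integral>\<^sup>+y. ennreal (indicator {-b<..<-a} y * (g y)\<^sup>2) \<partial>lborel))"
    by (intro mult_left_mono gL) simp
  also have "(\<integral>\<^sup>+y. ennreal (indicator {-b<..<-a} y * (g y)\<^sup>2) \<partial>lborel)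
      = (\<integral>\<^sup>+y. ennreal (indicator {-b<..<-a} (- y) * (g (- y))\<^sup>2) \<partial>lborel)"
    by (rule nn_reflect[of "\<lambda>y. ennreal (indicator {-b<..<-a} y * (g y)\<^sup>2)"]) measurable
  also have "\<dots> \<le> (\<integral>\<^sup>+y. ennreal (Gm\<^sup>2 * exp (- 2 * lam * a)) * (indicator {a<..<b} y * ennreal ((DR b \<mu> lam \<phi> y)\<^sup>2)) \<partial>lborel)"
  proof (intro nn_integral_mono)
    fix y
    show "ennreal (indicator {-b<..<-a} (- y) * (g (- y))\<^sup>2) \<le> ennreal (Gm\<^sup>2 * exp (- 2 * lam * a)) * (indicator {a<..<b} y * ennreal ((DR b \<mu> lam \<phi> y)\<^sup>2))"
    proof (cases "y \<in> {a<..<b}")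
      case True
      have gy: "g (- y) = Gm * exp (- lam * y) * DR b \<mu> lam \<phi> y"
        using Gm by (simp add: DReq exp_minus field_simps)
      have "(g (- y))\<^sup>2 = Gm\<^sup>2 * exp (- 2 * lam * y) * (DR b \<mu> lam \<phi> y)\<^sup>2"
        by (simp add: gy power_mult_distrib power2_eq_square exp_add[symmetric] mult_ac)
      also have "\<dots> \<le> Gm\<^sup>2 * exp (- 2 * lam * a) * (DR b \<mu> lam \<phi> y)\<^sup>2"
        using True lam by (intro mult_right_mono mult_left_mono) (auto intro: mult_left_mono)
      finally show ?thesis using True by (simp add: ennreal_mult[symmetric] indicator_def)
    qed (auto simp: indicator_def)
  qed
  also have "\<dots> = ennreal (Gm\<^sup>2 * exp (- 2 * lam * a)) * L2sq a b (DR b \<mu> lam \<phi>)"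
    unfolding L2sq_def by (rule nn_integral_cmult) measurable
  finally have "L2sq a b \<phi> \<le> ennreal (exp (2 * lam * b)) * (ennreal (KC \<mu> (- a - - b)) * (ennreal (Gm\<^sup>2 * exp (- 2 * lam * a)) * L2sq a b (DR b \<mu> lam \<phi>)))"
    by (simp add: mult_left_mono)
  also have "\<dots> = ennreal (CL a b lam \<mu>) * L2sq a b (DR b \<mu> lam \<phi>)"
    by (simp add: CL_def Gm_def ennreal_mult KC_nonneg mult_ac)
  finally show ?thesis using cont by simp
qed



lemma ind_sq: "indicator S x * ennreal ((f x)\<^sup>2) = ennreal ((indicator S x * f x)\<^sup>2)"
  by (simp add: indicator_def)

lemma L2sq_tri:
  fixes f g :: "real \<Rightarrow> real"
  assumes [measurable]: "(\<lambda>x. indicator {a<..<b} x * f x) \<in> borel_measurable lborel"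
    "(\<lambda>x. indicator {a<..<b} x * g x) \<in> borel_measurable lborel"
  shows "L2sq a b f \<le> 2 * L2sq a b (\<lambda>x. g x - f x) + 2 * L2sq a b g"
proof -
  define F where "F x = indicator {a<..<b} x * f x" for x
  define G where "G x = indicator {a<..<b} x * g x" for x
  have [measurable]: "F \<in> borel_measurable lborel" "G \<in> borel_measurable lborel"
    unfolding F_def G_def by simp_all
  have "L2sq a b f = (\<integral>\<^sup>+x. ennreal ((F x)\<^sup>2) \<partial>lborel)"
    unfolding L2sq_def F_def by (simp only: ind_sq)
  also have "\<dots> \<le> (\<integral>\<^sup>+x. ennreal (2 * (G x - F x)\<^sup>2) + ennreal (2 * (G x)\<^sup>2) \<partial>lborel)"
  proof (intro nn_integral_mono)
    fix x
    have e: "2 * (G x - F x)\<^sup>2 + 2 * (G x)\<^sup>2 - (F x)\<^sup>2 = (F x - 2 * G x)\<^sup>2"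
      by (simp add: power2_eq_square algebra_simps)
    have "(F x)\<^sup>2 \<le> 2 * (G x - F x)\<^sup>2 + 2 * (G x)\<^sup>2"
      using e zero_le_power2[of "F x - 2 * G x"] by linarith
    then show "ennreal ((F x)\<^sup>2) \<le> ennreal (2 * (G x - F x)\<^sup>2) + ennreal (2 * (G x)\<^sup>2)"
      by (simp add: ennreal_plus[symmetric] del: ennreal_plus)
  qed
  also have "\<dots> = (\<integral>\<^sup>+x. ennreal (2 * (G x - F x)\<^sup>2) \<partial>lborel) + (\<integral>\<^sup>+x. ennreal (2 * (G x)\<^sup>2) \<partial>lborel)"
    by (rule nn_integral_add) measurable
  also have "(\<integral>\<^sup>+x. ennreal (2 * (G x - F x)\<^sup>2) \<partial>lborel) = 2 * (\<integral>\<^sup>+x. ennreal ((G x - F x)\<^sup>2) \<partial>lborel)"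
    by (subst nn_integral_cmult[symmetric]) (auto simp: ennreal_mult)
  also have "(\<integral>\<^sup>+x. ennreal (2 * (G x)\<^sup>2) \<partial>lborel) = 2 * (\<integral>\<^sup>+x. ennreal ((G x)\<^sup>2) \<partial>lborel)"
    by (subst nn_integral_cmult[symmetric]) (auto simp: ennreal_mult)
  also have "(\<integral>\<^sup>+x. ennreal ((G x - F x)\<^sup>2) \<partial>lborel) = L2sq a b (\<lambda>x. g x - f x)"
    unfolding L2sq_def F_def G_def by (intro nn_integral_cong) (simp add: indicator_def)
  also have "(\<integral>\<^sup>+x. ennreal ((G x)\<^sup>2) \<partial>lborel) = L2sq a b g"
    unfolding L2sq_def G_def ind_sq ..
  finally show ?thesis .
qed

lemma L2sq_le_Hsq: "L2sq a b f \<le> Hsq a b \<mu> f"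
  unfolding Hsq_def by simp

lemma main_gen:
  fixes D :: "(real \<Rightarrow> real) \<Rightarrow> real \<Rightarrow> real"
  assumes Db: "\<And>\<phi>. \<phi> \<in> test_fun a b \<Longrightarrow> continuous_on UNIV (D \<phi>) \<and> L2sq a b \<phi> \<le> ennreal C * L2sq a b (D \<phi>)"
    and C: "0 \<le> C"
    and u: "u \<in> H0 a b \<mu>" and v: "ext_value a b \<mu> D u v"
  shows "L2sq a b u \<le> ennreal (4 * C) * L2sq a b v"
proof -
  obtain \<phi> where \<phi>: "\<And>k. \<phi> k \<in> test_fun a b" and conv: "(\<lambda>k. Hsq a b \<mu> (\<lambda>x. \<phi> k x - u x)) \<longlonglongrightarrow> 0"
    and uL: "u \<in> L2 a b" using u unfolding H0_def by blast
  have vL: "v \<in> L2 a b" and convD: "(\<lambda>k. L2sq a b (\<lambda>x. D (\<phi> k) x - v x)) \<longlonglongrightarrow> 0"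
    using v \<phi> conv unfolding ext_value_def by blast+
  have [measurable]: "(\<lambda>x. indicator {a<..<b} x * u x) \<in> borel_measurable lborel"
    "(\<lambda>x. indicator {a<..<b} x * v x) \<in> borel_measurable lborel"
    using uL vL by (simp_all add: L2_def)
  have vfin: "L2sq a b v < \<infinity>" using vL by (simp add: L2_def)
  have conv1: "(\<lambda>k. L2sq a b (\<lambda>x. \<phi> k x - u x)) \<longlonglongrightarrow> 0"
    by (rule tendsto_sandwich[OF _ _ tendsto_const conv]) (auto simp: L2sq_le_Hsq)
  have contD: "continuous_on UNIV (D (\<phi> k))" for k using Db[OF \<phi>] by blast
  have cphi: "continuous_on UNIV (\<phi> k)" for k
  proof -
    have "\<phi> k differentiable (at x)" for x
    proof -
      have "(deriv ^^ 0) (\<phi> k) differentiable (at x)" using \<phi>[of k] unfolding test_fun_def by blast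
      then show ?thesis by simp
    qed
    then show ?thesis by (simp add: continuous_at_imp_continuous_on differentiable_imp_continuous_within)
  qed
  have [measurable]: "D (\<phi> k) \<in> borel_measurable borel" "\<phi> k \<in> borel_measurable borel" for k
    using contD cphi by (auto intro: borel_measurable_continuous_onI)
  have bound: "L2sq a b u \<le> 2 * L2sq a b (\<lambda>x. \<phi> k x - u x) + 2 * (ennreal C * (2 * L2sq a b (\<lambda>x. D (\<phi> k) x - v x) + 2 * L2sq a b v))" for k
  proof -
    have h1: "L2sq a b u \<le> 2 * L2sq a b (\<lambda>x. \<phi> k x - u x) + 2 * L2sq a b (\<phi> k)"
      by (rule L2sq_tri) measurable
    have h2: "L2sq a b (\<phi> k) \<le> ennreal C * L2sq a b (D (\<phi> k))" using Db[OF \<phi>] by blast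
    have h3: "L2sq a b (D (\<phi> k)) \<le> 2 * L2sq a b (\<lambda>x. v x - D (\<phi> k) x) + 2 * L2sq a b v"
      by (rule L2sq_tri) measurable
    have h4: "L2sq a b (\<lambda>x. v x - D (\<phi> k) x) = L2sq a b (\<lambda>x. D (\<phi> k) x - v x)"
      unfolding L2sq_def by (simp add: power2_commute)
    have "L2sq a b (\<phi> k) \<le> ennreal C * (2 * L2sq a b (\<lambda>x. D (\<phi> k) x - v x) + 2 * L2sq a b v)"
      using h2 h3 h4 by (metis dual_order.trans mult_left_mono zero_le)
    then have "2 * L2sq a b (\<phi> k) \<le> 2 * (ennreal C * (2 * L2sq a b (\<lambda>x. D (\<phi> k) x - v x) + 2 * L2sq a b v))"
      by (rule mult_left_mono) simp
    then show ?thesis using h1 by (meson add_left_mono order_trans)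
  qed
  have lim: "(\<lambda>k. 2 * L2sq a b (\<lambda>x. \<phi> k x - u x) + 2 * (ennreal C * (2 * L2sq a b (\<lambda>x. D (\<phi> k) x - v x) + 2 * L2sq a b v)))
      \<longlonglongrightarrow> 2 * 0 + 2 * (ennreal C * (2 * 0 + 2 * L2sq a b v))"
    using vfin
    by (intro tendsto_add tendsto_mult_ennreal tendsto_const conv1 convD) (auto simp: ennreal_mult_eq_top_iff)
  have "L2sq a b u \<le> 2 * 0 + 2 * (ennreal C * (2 * 0 + 2 * L2sq a b v))"
    by (rule LIMSEQ_le_const[OF lim]) (use bound in blast)
  also have "\<dots> = ennreal (4 * C) * L2sq a b v"
    using C by (simp add: ennreal_mult mult_ac)
  finally show ?thesis .
qed


lemma CL_nonneg: "0 \<le> CL a b lam \<mu>"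
  unfolding CL_def by (intro mult_nonneg_nonneg KC_nonneg) auto

theorem lemma4:
  fixes a b lam \<mu> :: real
  assumes "a < b" and "0 \<le> lam" and "0 < \<mu>" and "\<mu> \<le> 1" and "\<mu> \<noteq> 1/2"
  shows "(\<exists>C>0. \<forall>u v. u \<in> H0 a b \<mu> \<and> ext_value a b \<mu> (DL a \<mu> lam) u v
             \<longrightarrow> L2sq a b u \<le> ennreal C * L2sq a b v) \<and>
         (\<exists>C>0. \<forall>u v. u \<in> H0 a b \<mu> \<and> ext_value a b \<mu> (DR b \<mu> lam) u v
             \<longrightarrow> L2sq a b u \<le> ennreal C * L2sq a b v)"
proof -
  define C0 where "C0 = CL a b lam \<mu>"
  have C0: "0 \<le> C0" unfolding C0_def by (rule CL_nonneg)
  have mono: "ennreal (4 * C0) * X \<le> ennreal (4 * C0 + 1) * X" for X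
    by (intro mult_right_mono ennreal_leI) auto
  have pos: "0 < 4 * C0 + 1" using C0 by simp
  show ?thesis
  proof (intro conjI exI[of _ "4 * C0 + 1"] allI impI pos)
    fix u v assume uv: "u \<in> H0 a b \<mu> \<and> ext_value a b \<mu> (DL a \<mu> lam) u v"
    have "L2sq a b u \<le> ennreal (4 * C0) * L2sq a b v"
      using main_gen[where D="DL a \<mu> lam", OF _ C0] uv DL_bound[OF assms(1-4)] by (auto simp: C0_def)
    then show "L2sq a b u \<le> ennreal (4 * C0 + 1) * L2sq a b v" using mono order_trans by blast
  next
    fix u v assume uv: "u \<in> H0 a b \<mu> \<and> ext_value a b \<mu> (DR b \<mu> lam) u v"
    have "L2sq a b u \<le> ennreal (4 * C0) * L2sq a b v"
      using main_gen[where D="DR b \<mu> lam", OF _ C0] uv DR_bound[OF assms(1-4)] by (auto simp: C0_def)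
    then show "L2sq a b u \<le> ennreal (4 * C0 + 1) * L2sq a b v" using mono order_trans by blast
  qed
qed

end
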